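(* For any single-elimination tournament $\mathcal{T}$, any scoring system $\sigma$, and any bracket $\widehat{B}$ of $\mathcal{T}$, the set $\{\widehat{B}_a:a\in P(\mathcal{T})\}$ is a $\sigma$-resolving set.
   Context: A single-elimination tournament is a finite directed graph $\mathcal{T}$ such that: (a) $\mathcal{T}$ has exactly one sink (vertex with no out-neighbours); (b) every non-sink vertex has exactly one out-neighbour; (c) $\mathcal{T}$ has no directed cycles; (d) $|N^-(v)|\ne 1$ for every vertex $v$, where $N^-(v)$ denotes the set of in-neighbours of $v$. The players $P(\mathcal{T})$ are the sources and the matches are $M(\mathcal{T})=V(\mathcal{T})\setminus P(\mathcal{T})$. For a vertex $u$, $P(u)$ is the set of players $c$ for which there is a directed walk from $c$ to $u$ (length $0$ allowed). A bracket is a function $B:V(\mathcal{T})\to P(\mathcal{T})$ with $B(c)=c$ for every player $c$ and $B(x)\in\{B(u):u\in N^-(x)\}$ for every match $x$. For a bracket $\widehat{B}$ and player $a$, $\widehat{B}_a$ is the bracket with $\widehat{B}_a(u)=a$ if $a\in P(u)$ and $\widehat{B}_a(u)=\widehat{B}(u)$ otherwise. A scoring system is any function $\sigma:M(\mathcal{T})\to\mathbb{R}_{>0}$, and $\mathrm{score}_\sigma(B,B')=\sum_{x\in M(\mathcal{T}):\,B(x)=B'(x)}\sigma(x)$. A set of brackets $\mathcal{B}$ is $\sigma$-resolving if for every pair of distinct brackets $B\ne B'$ there is $B_i\in\mathcal{B}$ with $\mathrm{score}_\sigma(B_i,B)\ne\mathrm{score}_\sigma(B_i,B')$. *)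

theory Defs
  imports Complex_Main
begin

definition in_nbrs :: "'v set \<Rightarrow> ('v \<times> 'v) set \<Rightarrow> 'v \<Rightarrow> 'v set" where
  "in_nbrs V E v = {u \<in> V. (u, v) \<in> E}"

definition out_nbrs :: "'v set \<Rightarrow> ('v \<times> 'v) set \<Rightarrow> 'v \<Rightarrow> 'v set" where
  "out_nbrs V E v = {w \<in> V. (v, w) \<in> E}"

definition sinks :: "'v set \<Rightarrow> ('v \<times> 'v) set \<Rightarrow> 'v set" where
  "sinks V E = {v \<in> V. out_nbrs V E v = {}}"

definition single_elim_tournament :: "'v set \<Rightarrow> ('v \<times> 'v) set \<Rightarrow> bool" where
  "single_elim_tournament V E \<longleftrightarrow>
     finite V \<and> E \<subseteq> V \<times> V \<and>
     card (sinks V E) = 1 \<and>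
     (\<forall>v \<in> V - sinks V E. card (out_nbrs V E v) = 1) \<and>
     acyclic E \<and>
     (\<forall>v \<in> V. card (in_nbrs V E v) \<noteq> 1)"

definition players :: "'v set \<Rightarrow> ('v \<times> 'v) set \<Rightarrow> 'v set" where
  "players V E = {v \<in> V. in_nbrs V E v = {}}"

definition matches :: "'v set \<Rightarrow> ('v \<times> 'v) set \<Rightarrow> 'v set" where
  "matches V E = V - players V E"

definition players_of :: "'v set \<Rightarrow> ('v \<times> 'v) set \<Rightarrow> 'v \<Rightarrow> 'v set" where
  "players_of V E u = {c \<in> players V E. (c, u) \<in> E\<^sup>*}"

text \<open>A bracket is a function on V (values outside V are irrelevant).\<close>
definition bracket :: "'v set \<Rightarrow> ('v \<times> 'v) set \<Rightarrow> ('v \<Rightarrow> 'v) \<Rightarrow> bool" where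
  "bracket V E B \<longleftrightarrow>
     (\<forall>v \<in> V. B v \<in> players V E) \<and>
     (\<forall>c \<in> players V E. B c = c) \<and>
     (\<forall>x \<in> matches V E. B x \<in> B ` in_nbrs V E x)"

definition bracket_win :: "'v set \<Rightarrow> ('v \<times> 'v) set \<Rightarrow> ('v \<Rightarrow> 'v) \<Rightarrow> 'v \<Rightarrow> ('v \<Rightarrow> 'v)" where
  "bracket_win V E B a = (\<lambda>u. if a \<in> players_of V E u then a else B u)"

definition scoring_system :: "'v set \<Rightarrow> ('v \<times> 'v) set \<Rightarrow> ('v \<Rightarrow> real) \<Rightarrow> bool" where
  "scoring_system V E \<sigma> \<longleftrightarrow> (\<forall>x \<in> matches V E. \<sigma> x > 0)"

definition score :: "'v set \<Rightarrow> ('v \<times> 'v) set \<Rightarrow> ('v \<Rightarrow> real) \<Rightarrow> ('v \<Rightarrow> 'v) \<Rightarrow> ('v \<Rightarrow> 'v) \<Rightarrow> real" where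
  "score V E \<sigma> B B' = (\<Sum>x \<in> {x \<in> matches V E. B x = B' x}. \<sigma> x)"

definition resolving :: "'v set \<Rightarrow> ('v \<times> 'v) set \<Rightarrow> ('v \<Rightarrow> real) \<Rightarrow> ('v \<Rightarrow> 'v) set \<Rightarrow> bool" where
  "resolving V E \<sigma> \<B> \<longleftrightarrow>
     (\<forall>B B'. bracket V E B \<longrightarrow> bracket V E B' \<longrightarrow> (\<exists>v \<in> V. B v \<noteq> B' v) \<longrightarrow>
        (\<exists>Bi \<in> \<B>. score V E \<sigma> Bi B \<noteq> score V E \<sigma> Bi B'))"

end

theory Submission
  imports Defs
begin

lemma func_E:
  assumes "single_elim_tournament V E" "(v,a) \<in> E" "(v,b) \<in> E"
  shows "a = b"
proof -
  have EV: "E \<subseteq> V \<times> V" using assms(1) unfolding single_elim_tournament_def by auto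
  have "a \<in> out_nbrs V E v" "b \<in> out_nbrs V E v" "v \<in> V"
    using assms EV unfolding out_nbrs_def by auto
  hence "v \<in> V - sinks V E" unfolding sinks_def by auto
  hence "card (out_nbrs V E v) = 1" using assms(1) unfolding single_elim_tournament_def by auto
  then obtain w where "out_nbrs V E v = {w}" by (rule card_1_singletonE)
  thus ?thesis using \<open>a \<in> out_nbrs V E v\<close> \<open>b \<in> out_nbrs V E v\<close> by auto
qed

lemma chain_E:
  assumes "single_elim_tournament V E" "(p,a) \<in> E\<^sup>*" "(p,b) \<in> E\<^sup>*"
  shows "(a,b) \<in> E\<^sup>* \<or> (b,a) \<in> E\<^sup>*"
  using assms(2)
proof (induction rule: rtrancl_induct)
  case base
  then show ?case using assms(3) by auto
next
  case (step a a')
  from step.IH show ?case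
  proof
    assume "(b,a) \<in> E\<^sup>*" thus ?thesis using step.hyps(2) by (meson rtrancl.rtrancl_into_rtrancl)
  next
    assume ab: "(a,b) \<in> E\<^sup>*"
    show ?thesis
    proof (cases "a = b")
      case True thus ?thesis using step.hyps(2) by auto
    next
      case False
      then obtain c where "(a,c) \<in> E" "(c,b) \<in> E\<^sup>*" using ab by (metis converse_rtranclE)
      then have "c = a'" using func_E[OF assms(1) _ step.hyps(2)] by auto
      thus ?thesis using \<open>(c,b) \<in> E\<^sup>*\<close> by auto
    qed
  qed
qed

lemma acyc: "single_elim_tournament V E \<Longrightarrow> acyclic E"
  unfolding single_elim_tournament_def by auto

lemma L3:
  assumes T: "single_elim_tournament V E" and "(p,w) \<in> E\<^sup>*" "(p,y) \<in> E\<^sup>*" "(w,z) \<in> E" "(y,z) \<in> E"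
  shows "w = y"
proof -
  have gen: "w' = y'" if h1: "(w',y') \<in> E\<^sup>*" and "(w',z) \<in> E" "(y',z) \<in> E" for w' y'
  proof (rule ccontr)
    assume "w' \<noteq> y'"
    with h1 obtain c where "(w',c) \<in> E" "(c,y') \<in> E\<^sup>*" by (metis converse_rtranclE)
    then have "c = z" using func_E[OF T _ that(2)] by auto
    then have "(z,z) \<in> E\<^sup>+" using \<open>(c,y') \<in> E\<^sup>*\<close> that(3) by auto
    thus False using acyc[OF T] unfolding acyclic_def by auto
  qed
  from chain_E[OF T assms(2,3)] show ?thesis
    using gen assms(4,5) by metis
qed

lemma L1:
  assumes T: "single_elim_tournament V E" and B: "bracket V E B" and x: "x \<in> V"
  shows "(B x, x) \<in> E\<^sup>*"
proof -
  have EV: "E \<subseteq> V \<times> V" and fin: "finite V" using T unfolding single_elim_tournament_def by auto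
  have "finite E" using EV fin by (meson finite_SigmaI finite_subset)
  hence wf: "wf E" using acyc[OF T] by (simp add: finite_acyclic_wf)
  show ?thesis using x
  proof (induction x rule: wf_induct[OF wf])
    case (1 x)
    show ?case
    proof (cases "x \<in> players V E")
      case True
      then show ?thesis using B unfolding bracket_def by auto
    next
      case False
      then have "x \<in> matches V E" using 1 unfolding matches_def by auto
      then obtain u where u: "u \<in> in_nbrs V E x" "B x = B u" using B unfolding bracket_def by force
      then have "(u,x) \<in> E" "u \<in> V" unfolding in_nbrs_def by auto
      then have "(B u, u) \<in> E\<^sup>*" using 1 by auto
      thus ?thesis using u \<open>(u,x) \<in> E\<close> by auto
    qed
  qed
qed

lemma L2:
  assumes T: "single_elim_tournament V E" and B: "bracket V E B"
    and p: "(p,x) \<in> E\<^sup>*" and xy: "(x,y) \<in> E\<^sup>*" and By: "B y = p"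
  shows "B x = p"
  using xy By
proof (induction rule: rtrancl_induct)
  case base
  then show ?case by simp
next
  case (step y z)
  have EV: "E \<subseteq> V \<times> V" using T unfolding single_elim_tournament_def by auto
  have zV: "z \<in> V" "y \<in> V" using step.hyps(2) EV by auto
  have "y \<in> in_nbrs V E z" using step.hyps(2) zV unfolding in_nbrs_def by auto
  then have "z \<notin> players V E" unfolding players_def by auto
  then have "z \<in> matches V E" using zV unfolding matches_def by auto
  then obtain w where w: "w \<in> in_nbrs V E z" "B z = B w" using B unfolding bracket_def by force
  then have wz: "(w,z) \<in> E" "w \<in> V" unfolding in_nbrs_def by auto
  have "(p,w) \<in> E\<^sup>*" using L1[OF T B wz(2)] w step.prems by auto
  moreover have "(p,y) \<in> E\<^sup>*" using p step.hyps(1) by auto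
  ultimately have "w = y" using L3[OF T _ _ wz(1) step.hyps(2)] by auto
  then have "B y = p" using w step.prems by auto
  thus ?case using step.IH by auto
qed

theorem corollary5p14:
  fixes V :: "'v set" and E :: "('v \<times> 'v) set" and \<sigma> :: "'v \<Rightarrow> real" and Bh :: "'v \<Rightarrow> 'v"
  assumes "single_elim_tournament V E"
    and "scoring_system V E \<sigma>"
    and "bracket V E Bh"
  shows "resolving V E \<sigma> {bracket_win V E Bh a | a. a \<in> players V E}"
  unfolding resolving_def
proof (intro allI impI)
  fix B B'
  assume B: "bracket V E B" and B': "bracket V E B'" and ex: "\<exists>v\<in>V. B v \<noteq> B' v"
  note T = assms(1)
  have EV: "E \<subseteq> V \<times> V" and fin: "finite V" using T unfolding single_elim_tournament_def by auto
  have "finite E" using EV fin by (meson finite_SigmaI finite_subset)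
  hence wf: "wf E" using acyc[OF T] by (simp add: finite_acyclic_wf)
  define S where "S = {x \<in> V. B x \<noteq> B' x}"
  obtain v where "v \<in> S" using ex unfolding S_def by auto
  then obtain x0 where x0S: "x0 \<in> S" and minS: "\<And>y. (y,x0) \<in> E\<^sup>+ \<Longrightarrow> y \<notin> S"
    using wfE_min[OF wf_trancl[OF wf]] by metis
  have x0V: "x0 \<in> V" using x0S unfolding S_def by auto
  define p where "p = B x0"
  define q where "q = B' x0"
  have pq: "p \<noteq> q" using x0S unfolding S_def p_def q_def by auto
  have pP: "p \<in> players V E" using B x0V unfolding bracket_def p_def by auto
  have qP: "q \<in> players V E" using B' x0V unfolding bracket_def q_def by auto
  have px0: "(p,x0) \<in> E\<^sup>*" using L1[OF T B x0V] p_def by simp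
  have qx0: "(q,x0) \<in> E\<^sup>*" using L1[OF T B' x0V] q_def by simp
  have x0M: "x0 \<in> matches V E"
  proof -
    have "x0 \<notin> players V E" using x0S B B' unfolding S_def bracket_def by auto
    thus ?thesis using x0V unfolding matches_def by auto
  qed
  define M where "M = matches V E"
  have finM: "finite M" using fin unfolding M_def matches_def by auto
  define W where "W = (\<lambda>a. bracket_win V E Bh a)"
  define f where "f = (\<lambda>a x. (if W a x = B x then \<sigma> x else 0) - (if W a x = B' x then \<sigma> x else 0))"
  have Delta: "score V E \<sigma> (W a) B - score V E \<sigma> (W a) B' = (\<Sum>x\<in>M. f a x)" for a
    unfolding score_def f_def M_def using finM unfolding M_def
    by (simp add: sum.inter_filter sum_subtractf)
  have below: "(x,x0) \<in> E\<^sup>+" if "(a,x) \<in> E\<^sup>*" "(a,x0) \<in> E\<^sup>*" "(b,x0) \<in> E\<^sup>*" "(b,x) \<notin> E\<^sup>*" for a b x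
  proof -
    from chain_E[OF T that(1,2)] show ?thesis
    proof
      assume "(x0,x) \<in> E\<^sup>*" thus ?thesis using that(3,4) by (meson rtrancl_trans)
    next
      assume "(x,x0) \<in> E\<^sup>*" moreover have "x \<noteq> x0" using that(3,4) by auto
      ultimately show ?thesis by (meson rtranclD)
    qed
  qed
  have term_nonneg: "f p x - f q x \<ge> 0" and term_x0: "x = x0 \<Longrightarrow> f p x - f q x > 0" if xM: "x \<in> M" for x
  proof -
    have xV: "x \<in> V" using xM unfolding M_def matches_def by auto
    have sx: "\<sigma> x > 0" using assms(2) xM unfolding scoring_system_def M_def by auto
    have Wp: "W p x = (if (p,x) \<in> E\<^sup>* then p else Bh x)"
      unfolding W_def bracket_win_def players_of_def using pP by auto
    have Wq: "W q x = (if (q,x) \<in> E\<^sup>* then q else Bh x)"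
      unfolding W_def bracket_win_def players_of_def using qP by auto
    have "f p x - f q x \<ge> 0 \<and> (x = x0 \<longrightarrow> f p x - f q x > 0)"
    proof (cases "(p,x) \<in> E\<^sup>*")
      case pT: True
      show ?thesis
      proof (cases "(q,x) \<in> E\<^sup>*")
        case qT: True
        have "(x0,x) \<in> E\<^sup>*"
        proof -
          from chain_E[OF T pT px0] show ?thesis
          proof
            assume "(x,x0) \<in> E\<^sup>*"
            show ?thesis
            proof (cases "x = x0")
              case True thus ?thesis by simp
            next
              case False
              then have "(x,x0) \<in> E\<^sup>+" using \<open>(x,x0) \<in> E\<^sup>*\<close> by (meson rtranclD)
              then have "x \<notin> S" using minS by auto
              then have eq: "B x = B' x" using xV unfolding S_def by auto
              have "B x = p" using L2[OF T B pT \<open>(x,x0) \<in> E\<^sup>*\<close>] p_def by simp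
              moreover have "B' x = q" using L2[OF T B' qT \<open>(x,x0) \<in> E\<^sup>*\<close>] q_def by simp
              ultimately show ?thesis using eq pq by simp
            qed
          qed simp
        qed
        have n1: "B' x \<noteq> p"
        proof
          assume "B' x = p"
          then have "B' x0 = p" using L2[OF T B' px0 \<open>(x0,x) \<in> E\<^sup>*\<close>] by simp
          thus False using pq q_def by simp
        qed
        have n2: "B x \<noteq> q"
        proof
          assume "B x = q"
          then have "B x0 = q" using L2[OF T B qx0 \<open>(x0,x) \<in> E\<^sup>*\<close>] by simp
          thus False using pq p_def by simp
        qed
        have "f p x - f q x = (if p = B x then \<sigma> x else 0) + (if q = B' x then \<sigma> x else 0)"
          unfolding f_def using Wp Wq pT qT n1 n2 by auto
        moreover have "x = x0 \<longrightarrow> p = B x \<and> q = B' x" using p_def q_def by auto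
        ultimately show ?thesis using sx by auto
      next
        case qF: False
        have "(x,x0) \<in> E\<^sup>+" using below[OF pT px0 qx0 qF] .
        then have "x \<notin> S" using minS by auto
        then have eq: "B x = B' x" using xV unfolding S_def by auto
        have "x \<noteq> x0" using qF qx0 by auto
        then show ?thesis unfolding f_def using Wp Wq pT qF eq by auto
      qed
    next
      case pF: False
      show ?thesis
      proof (cases "(q,x) \<in> E\<^sup>*")
        case qT: True
        have "(x,x0) \<in> E\<^sup>+" using below[OF qT qx0 px0 pF] .
        then have "x \<notin> S" using minS by auto
        then have eq: "B x = B' x" using xV unfolding S_def by auto
        have "x \<noteq> x0" using pF px0 by auto
        then show ?thesis unfolding f_def using Wp Wq pF qT eq by auto
      next
        case qF: False
        have "x \<noteq> x0" using pF px0 by auto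
        then show ?thesis unfolding f_def using Wp Wq pF qF by auto
      qed
    qed
    thus "f p x - f q x \<ge> 0" "x = x0 \<Longrightarrow> f p x - f q x > 0" by auto
  qed
  have "(\<Sum>x\<in>M. f p x - f q x) > 0"
    by (rule sum_pos2[OF finM, of x0]) (use x0M term_nonneg term_x0 M_def in auto)
  hence "(\<Sum>x\<in>M. f p x) \<noteq> (\<Sum>x\<in>M. f q x)" by (simp add: sum_subtractf)
  hence "score V E \<sigma> (W p) B \<noteq> score V E \<sigma> (W p) B' \<or> score V E \<sigma> (W q) B \<noteq> score V E \<sigma> (W q) B'"
    using Delta[of p] Delta[of q] by auto
  moreover have "W p \<in> {bracket_win V E Bh a | a. a \<in> players V E}"
    "W q \<in> {bracket_win V E Bh a | a. a \<in> players V E}" using pP qP unfolding W_def by auto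
  ultimately show "\<exists>Bi\<in>{bracket_win V E Bh a | a. a \<in> players V E}. score V E \<sigma> Bi B \<noteq> score V E \<sigma> Bi B'"
    by blast
qed

end
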